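(* Let $K$ be a finitely generated abelian group and $S=\mathbb{K}[T_1,\dots,T_r]$ a $K$-graded polynomial ring with homogeneous variables whose grading is effective and pointed, let $I\subseteq S$ be a homogeneous ideal, and let $G:=\operatorname{Aut}_K(S)$. Then the vector subspaces $V:=\bigoplus_{w\in\Omega_S}S_w$ and $W:=\bigoplus_{u\in\Omega_I}S_u$ of $S$ are finite-dimensional, $V$ is invariant under the linear action of $G$ on $S$, and the induced representation $G\to\operatorname{GL}(V)$ is faithful.
   Context: $\mathbb{K}$ algebraically closed of characteristic zero. $\operatorname{Aut}_K(S)$ is the group of graded automorphisms $(\varphi,\psi)$ ($\varphi(S_w)=S_{\psi(w)}$, $\psi\in\operatorname{Aut}(K)$), acting on $S$ by $f\mapsto\varphi(f)$. Effective: $\omega(S)=\{w;\ S_w\ne0\}$ generates $K$; pointed: $S_0=\mathbb{K}$ and the cone generated by $\omega(S)$ in $K\otimes\mathbb{Q}$ contains no line. $w'\le w$ iff $w-w'\in\omega(S)$. $\Omega_S:=\{w\in\omega(S);\ S_w\not\subseteq S_{<w}\}$ where $S_{<w}$ is the subalgebra generated by all $S_{w'}$ with $w'<w$; for a homogeneous ideal $I$, $\Omega_I:=\{w;\ I_w\not\subseteq I_{<w}\}$ where $I_{<w}$ is the ideal generated by all $I_{w'}=I\cap S_{w'}$, $w'<w$. *)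

theory Defs
  imports "HOL-Library.Poly_Mapping" "HOL-Computational_Algebra.Polynomial"
begin

type_synonym ('v, 'k) mpoly_pm = "('v \<Rightarrow>\<^sub>0 nat) \<Rightarrow>\<^sub>0 'k"

definition nsmul :: "nat \<Rightarrow> 'g::ab_group_add \<Rightarrow> 'g" where
  "nsmul n x = (\<Sum>_<n. x)"

definition zsmul :: "int \<Rightarrow> 'g::ab_group_add \<Rightarrow> 'g" where
  "zsmul z x = (if z \<ge> 0 then nsmul (nat z) x else - nsmul (nat (- z)) x)"

inductive_set gen_subgroup :: "'g::ab_group_add set \<Rightarrow> 'g set" for A where
  gs_zero: "0 \<in> gen_subgroup A"
| gs_gen: "a \<in> A \<Longrightarrow> a \<in> gen_subgroup A"
| gs_add: "a \<in> gen_subgroup A \<Longrightarrow> b \<in> gen_subgroup A \<Longrightarrow> a + b \<in> gen_subgroup A"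
| gs_neg: "a \<in> gen_subgroup A \<Longrightarrow> - a \<in> gen_subgroup A"

definition fin_gen_group :: "'g::ab_group_add itself \<Rightarrow> bool" where
  "fin_gen_group _ \<longleftrightarrow> (\<exists>F::'g set. finite F \<and> gen_subgroup F = UNIV)"

definition mdeg :: "('v::finite \<Rightarrow> 'g::ab_group_add) \<Rightarrow> ('v \<Rightarrow>\<^sub>0 nat) \<Rightarrow> 'g" where
  "mdeg dg m = (\<Sum>v\<in>UNIV. nsmul (Poly_Mapping.lookup m v) (dg v))"

definition homog :: "('v::finite \<Rightarrow> 'g::ab_group_add) \<Rightarrow> 'g \<Rightarrow> ('v, 'k::zero) mpoly_pm set" where
  "homog dg w = {f. \<forall>m\<in>Poly_Mapping.keys f. mdeg dg m = w}"

definition hpart :: "('v::finite \<Rightarrow> 'g::ab_group_add) \<Rightarrow> 'g \<Rightarrow> ('v, 'k::zero) mpoly_pm \<Rightarrow> ('v, 'k) mpoly_pm" where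
  "hpart dg w f = Abs_poly_mapping (\<lambda>m. if mdeg dg m = w then Poly_Mapping.lookup f m else 0)"

definition const_pm :: "'k::zero \<Rightarrow> ('v, 'k) mpoly_pm" where
  "const_pm c = Poly_Mapping.single 0 c"

definition smult_pm :: "'k::semiring_0 \<Rightarrow> ('v, 'k) mpoly_pm \<Rightarrow> ('v, 'k) mpoly_pm" where
  "smult_pm c f = Poly_Mapping.map ((*) c) f"

definition omegaS :: "('v::finite \<Rightarrow> 'g::ab_group_add) \<Rightarrow> 'k::zero itself \<Rightarrow> 'g set" where
  "omegaS dg _ = {w. \<exists>f::('v,'k) mpoly_pm. f \<in> homog dg w \<and> f \<noteq> 0}"

text \<open>Elements of K (x) Q are represented by pairs (x, n), n > 0, standing for x (x) 1/n.\<close>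
definition tq_eq :: "'g::ab_group_add \<times> nat \<Rightarrow> 'g \<times> nat \<Rightarrow> bool" where
  "tq_eq p q \<longleftrightarrow> (\<exists>t>0. nsmul t (nsmul (snd q) (fst p) - nsmul (snd p) (fst q)) = 0)"

definition in_cone :: "'g::ab_group_add set \<Rightarrow> 'g \<times> nat \<Rightarrow> bool" where
  "in_cone A p \<longleftrightarrow> snd p > 0 \<and> (\<exists>F c d. finite F \<and> F \<subseteq> A \<and> d > (0::nat) \<and>
       tq_eq p (\<Sum>a\<in>F. nsmul (c a) a, d))"

definition cone_contains_line :: "'g::ab_group_add set \<Rightarrow> bool" where
  "cone_contains_line A \<longleftrightarrow> (\<exists>x n. n > 0 \<and> \<not> tq_eq (x, n) (0, 1) \<and>
       (\<forall>p::int. \<forall>q::nat. q > 0 \<longrightarrow> in_cone A (zsmul p x, q * n)))"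

definition effective :: "('v::finite \<Rightarrow> 'g::ab_group_add) \<Rightarrow> 'k::zero itself \<Rightarrow> bool" where
  "effective dg k \<longleftrightarrow> gen_subgroup (omegaS dg k) = UNIV"

definition pointed :: "('v::finite \<Rightarrow> 'g::ab_group_add) \<Rightarrow> 'k::zero itself \<Rightarrow> bool" where
  "pointed dg k \<longleftrightarrow> (homog dg 0 :: ('v,'k) mpoly_pm set) = range const_pm
      \<and> \<not> cone_contains_line (omegaS dg k)"

definition deg_le :: "('v::finite \<Rightarrow> 'g::ab_group_add) \<Rightarrow> 'k::zero itself \<Rightarrow> 'g \<Rightarrow> 'g \<Rightarrow> bool" where
  "deg_le dg k w' w \<longleftrightarrow> w - w' \<in> omegaS dg k"

definition deg_less :: "('v::finite \<Rightarrow> 'g::ab_group_add) \<Rightarrow> 'k::zero itself \<Rightarrow> 'g \<Rightarrow> 'g \<Rightarrow> bool" where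
  "deg_less dg k w' w \<longleftrightarrow> deg_le dg k w' w \<and> w' \<noteq> w"

inductive_set subalg :: "('v, 'k::comm_ring_1) mpoly_pm set \<Rightarrow> ('v, 'k) mpoly_pm set" for A where
  sa_const: "const_pm c \<in> subalg A"
| sa_gen: "a \<in> A \<Longrightarrow> a \<in> subalg A"
| sa_add: "a \<in> subalg A \<Longrightarrow> b \<in> subalg A \<Longrightarrow> a + b \<in> subalg A"
| sa_mult: "a \<in> subalg A \<Longrightarrow> b \<in> subalg A \<Longrightarrow> a * b \<in> subalg A"

inductive_set ideal_gen :: "('v, 'k::comm_ring_1) mpoly_pm set \<Rightarrow> ('v, 'k) mpoly_pm set" for A where
  ig_zero: "0 \<in> ideal_gen A"
| ig_gen: "a \<in> A \<Longrightarrow> a \<in> ideal_gen A"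
| ig_add: "a \<in> ideal_gen A \<Longrightarrow> b \<in> ideal_gen A \<Longrightarrow> a + b \<in> ideal_gen A"
| ig_mult: "a \<in> ideal_gen A \<Longrightarrow> r * a \<in> ideal_gen A"

definition is_ideal :: "('v, 'k::comm_ring_1) mpoly_pm set \<Rightarrow> bool" where
  "is_ideal I \<longleftrightarrow> 0 \<in> I \<and> (\<forall>a\<in>I. \<forall>b\<in>I. a + b \<in> I) \<and> (\<forall>r. \<forall>a\<in>I. r * a \<in> I)"

definition homogeneous_ideal :: "('v::finite \<Rightarrow> 'g::ab_group_add) \<Rightarrow> ('v, 'k::comm_ring_1) mpoly_pm set \<Rightarrow> bool" where
  "homogeneous_ideal dg I \<longleftrightarrow> is_ideal I \<and> (\<forall>f\<in>I. \<forall>w. hpart dg w f \<in> I)"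

definition OmegaS :: "('v::finite \<Rightarrow> 'g::ab_group_add) \<Rightarrow> 'k::comm_ring_1 itself \<Rightarrow> 'g set" where
  "OmegaS dg k = {w \<in> omegaS dg k.
     \<not> ((homog dg w :: ('v,'k) mpoly_pm set) \<subseteq> subalg (\<Union>w'\<in>{w'. deg_less dg k w' w}. homog dg w'))}"

definition OmegaI :: "('v::finite \<Rightarrow> 'g::ab_group_add) \<Rightarrow> ('v, 'k::comm_ring_1) mpoly_pm set \<Rightarrow> 'g set" where
  "OmegaI dg I = {w. \<not> (I \<inter> homog dg w \<subseteq>
       ideal_gen (\<Union>w'\<in>{w'. deg_less dg TYPE('k) w' w}. I \<inter> homog dg w'))}"

definition dsum_homog :: "('v::finite \<Rightarrow> 'g::ab_group_add) \<Rightarrow> 'g set \<Rightarrow> ('v, 'k::zero) mpoly_pm set" where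
  "dsum_homog dg D = {f. \<forall>m\<in>Poly_Mapping.keys f. mdeg dg m \<in> D}"

definition fin_dim :: "('v, 'k::field) mpoly_pm set \<Rightarrow> bool" where
  "fin_dim V \<longleftrightarrow> (\<exists>B. finite B \<and> B \<subseteq> V \<and> V \<subseteq> module.span smult_pm B)"

text \<open>Graded automorphisms (phi, psi) of S: phi a k-algebra automorphism, psi a group
  automorphism of K, with phi(S_w) = S_(psi w).\<close>
definition graded_aut :: "('v::finite \<Rightarrow> 'g::ab_group_add)
   \<Rightarrow> (('v, 'k::field) mpoly_pm \<Rightarrow> ('v, 'k) mpoly_pm) \<Rightarrow> ('g \<Rightarrow> 'g) \<Rightarrow> bool" where
  "graded_aut dg \<phi> \<psi> \<longleftrightarrow>
     bij \<phi> \<and> (\<forall>f g. \<phi> (f + g) = \<phi> f + \<phi> g) \<and> (\<forall>f g. \<phi> (f * g) = \<phi> f * \<phi> g)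
     \<and> \<phi> 1 = 1 \<and> (\<forall>c f. \<phi> (smult_pm c f) = smult_pm c (\<phi> f))
     \<and> bij \<psi> \<and> (\<forall>a b. \<psi> (a + b) = \<psi> a + \<psi> b)
     \<and> (\<forall>w. \<phi> ` homog dg w = homog dg (\<psi> w))"

definition alg_closed :: "'k::field itself \<Rightarrow> bool" where
  "alg_closed _ \<longleftrightarrow> (\<forall>p::'k poly. degree p > 0 \<longrightarrow> (\<exists>x. poly p x = 0))"

end

theory Submission
  imports Defs
begin

lemma nsmul_0[simp]: "nsmul 0 x = 0" by (simp add: nsmul_def)
lemma nsmul_Suc: "nsmul (Suc n) x = x + nsmul n x" by (simp add: nsmul_def add.commute)
lemma nsmul_1[simp]: "nsmul 1 x = x" by (simp add: nsmul_def)
lemma nsmul_Suc0[simp]: "nsmul (Suc 0) x = x" by (simp add: nsmul_def)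
lemma nsmul_add: "nsmul (a + b) x = nsmul a x + nsmul b x"
  by (induction a) (simp_all add: nsmul_Suc add.assoc)

lemma nsmul_hom: assumes "\<And>a b. f (a + b) = f a + f b" shows "f (nsmul n x) = nsmul n (f x)"
proof -
  have f0: "f 0 = 0" using assms[of 0 0] by simp
  show ?thesis by (induction n) (simp_all add: nsmul_Suc f0 assms)
qed

lemma mdeg_add: "mdeg dg (a + b) = mdeg dg a + mdeg dg b"
  by (simp add: mdeg_def lookup_add nsmul_add sum.distrib)

lemma mdeg_0[simp]: "mdeg dg 0 = 0"
  by (simp add: mdeg_def)

lemma mdeg_single: "mdeg dg (Poly_Mapping.single v 1) = dg v"
proof -
  have "mdeg dg (Poly_Mapping.single v 1) = (\<Sum>u\<in>UNIV. if u = v then dg v else 0)"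
    unfolding mdeg_def by (rule sum.cong) (auto simp: lookup_single when_def)
  thus ?thesis by simp
qed

lemma lookup_single_mult:
  fixes f :: "('a::cancel_comm_monoid_add) \<Rightarrow>\<^sub>0 ('b::comm_semiring_0)"
  shows "Poly_Mapping.lookup (Poly_Mapping.single t c * f) (t + m) = c * Poly_Mapping.lookup f m"
proof -
  have "Poly_Mapping.lookup (Poly_Mapping.single t c * f) (t + m)
     = (\<Sum>l. Poly_Mapping.lookup (Poly_Mapping.single t c) l * (\<Sum>q. Poly_Mapping.lookup f q when t + m = l + q))"
    by (simp add: lookup_mult)
  also have "\<dots> = (\<Sum>l. (c * (\<Sum>q. Poly_Mapping.lookup f q when t + m = l + q)) when l = t)"
    by (rule Sum_any.cong) (simp add: lookup_single when_def)
  also have "\<dots> = c * (\<Sum>q. Poly_Mapping.lookup f q when t + m = t + q)" by simp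
  also have "(\<Sum>q. Poly_Mapping.lookup f q when t + m = t + q) = (\<Sum>q. Poly_Mapping.lookup f q when q = m)"
    by (rule Sum_any.cong) (auto simp: when_def)
  finally show ?thesis by simp
qed

lemma keys_single_mult:
  fixes f :: "('a::cancel_comm_monoid_add) \<Rightarrow>\<^sub>0 ('b::comm_semiring_0)"
  shows "k \<in> Poly_Mapping.keys (Poly_Mapping.single t c * f) \<Longrightarrow> \<exists>m\<in>Poly_Mapping.keys f. k = t + m"
  using keys_mult[of "Poly_Mapping.single t c" f] by (auto split: if_splits)

lemma pm_expand: "p = (\<Sum>m\<in>Poly_Mapping.keys p. Poly_Mapping.single m (Poly_Mapping.lookup p m))"
proof (rule poly_mapping_eqI)
  fix k
  let ?S = "\<Sum>m\<in>Poly_Mapping.keys p. Poly_Mapping.single m (Poly_Mapping.lookup p m)"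
  have "Poly_Mapping.lookup ?S k
     = (\<Sum>m\<in>Poly_Mapping.keys p. if m = k then Poly_Mapping.lookup p m else 0)"
    by (simp add: lookup_sum lookup_single when_def)
  also have "\<dots> = Poly_Mapping.lookup p k" by (auto simp: in_keys_iff)
  finally show "Poly_Mapping.lookup p k = Poly_Mapping.lookup ?S k" by simp
qed

lemma homog_single: "mdeg dg m = w \<Longrightarrow> Poly_Mapping.single m c \<in> homog dg w"
  by (simp add: homog_def)

lemma mdeg_in_omegaS: "mdeg dg m \<in> omegaS dg TYPE('k::zero_neq_one)"
  unfolding omegaS_def
proof (rule CollectI, rule exI[of _ "Poly_Mapping.single m (1::'k)"], intro conjI)
  show "Poly_Mapping.single m (1::'k) \<noteq> 0"
    by (metis lookup_single_eq lookup_zero one_neq_zero)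
qed (simp add: homog_def)

lemma omegaS_ex:
  fixes dg :: "'v::finite \<Rightarrow> 'g::ab_group_add"
  shows "w \<in> omegaS dg TYPE('k::zero) \<Longrightarrow> \<exists>m. mdeg dg m = w"
proof -
  assume "w \<in> omegaS dg TYPE('k)"
  then obtain f :: "('v,'k) mpoly_pm" where "f \<in> homog dg w" "f \<noteq> 0" by (auto simp: omegaS_def)
  then obtain m where "m \<in> Poly_Mapping.keys f" by (metis keys_eq_empty ex_in_conv)
  with \<open>f \<in> homog dg w\<close> show ?thesis by (auto simp: homog_def)
qed

lemma pointed_zero:
  fixes dg :: "'v::finite \<Rightarrow> 'g::ab_group_add"
  assumes "pointed dg TYPE('k::zero_neq_one)" "mdeg dg m = 0"
  shows "m = 0"
proof (rule ccontr)
  assume "m \<noteq> 0"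
  have "Poly_Mapping.single m (1::'k) \<in> homog dg 0" using assms(2) by (rule homog_single)
  with assms(1) obtain c :: 'k where "Poly_Mapping.single m 1 = const_pm c"
    by (auto simp: pointed_def)
  hence "Poly_Mapping.lookup (Poly_Mapping.single m (1::'k)) m = Poly_Mapping.lookup (const_pm c :: ('v,'k) mpoly_pm) m"
    by simp
  with \<open>m \<noteq> 0\<close> show False by (simp add: const_pm_def lookup_single when_def)
qed

lemma dickson_aux:
  fixes U :: "'v set"
  assumes "finite U"
  shows "\<exists>B\<subseteq>A. finite B \<and> (\<forall>a\<in>A. \<exists>b\<in>B. \<forall>v\<in>U. Poly_Mapping.lookup b v \<le> Poly_Mapping.lookup (a::'v \<Rightarrow>\<^sub>0 nat) v)"
  using assms
proof (induction U arbitrary: A rule: finite_induct)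
  case empty
  show ?case
  proof (cases "A = {}")
    case True thus ?thesis by auto
  next
    case False
    then obtain a0 where "a0 \<in> A" by auto
    thus ?thesis by (intro exI[of _ "{a0}"]) auto
  qed
next
  case (insert x U)
  obtain B0 where B0: "B0 \<subseteq> A" "finite B0" "\<forall>a\<in>A. \<exists>b\<in>B0. \<forall>v\<in>U. Poly_Mapping.lookup b v \<le> Poly_Mapping.lookup a v"
    using insert.IH[of A] by (elim exE conjE) blast
  define N where "N = Max (insert 0 ((\<lambda>b. Poly_Mapping.lookup b x) ` B0))"
  have "\<forall>k. \<exists>Bk. Bk \<subseteq> {a\<in>A. Poly_Mapping.lookup a x = k} \<and> finite Bk \<and>
     (\<forall>a\<in>{a\<in>A. Poly_Mapping.lookup a x = k}. \<exists>b\<in>Bk. \<forall>v\<in>U. Poly_Mapping.lookup b v \<le> Poly_Mapping.lookup a v)"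
    by (intro allI insert.IH)
  from choice[OF this] obtain Bf where Bf0: "\<forall>k. Bf k \<subseteq> {a\<in>A. Poly_Mapping.lookup a x = k} \<and> finite (Bf k) \<and>
     (\<forall>a\<in>{a\<in>A. Poly_Mapping.lookup a x = k}. \<exists>b\<in>Bf k. \<forall>v\<in>U. Poly_Mapping.lookup b v \<le> Poly_Mapping.lookup a v)"
    by blast
  have Bf: "\<And>k. Bf k \<subseteq> {a\<in>A. Poly_Mapping.lookup a x = k}" "\<And>k. finite (Bf k)"
     "\<And>k. \<forall>a\<in>{a\<in>A. Poly_Mapping.lookup a x = k}. \<exists>b\<in>Bf k. \<forall>v\<in>U. Poly_Mapping.lookup b v \<le> Poly_Mapping.lookup a v"
    using Bf0 by blast+
  define B where "B = B0 \<union> (\<Union>k<N. Bf k)"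
  have "B \<subseteq> A" using B0(1) Bf(1) unfolding B_def by blast
  moreover have "finite B" using B0 Bf by (auto simp: B_def)
  moreover have "\<forall>a\<in>A. \<exists>b\<in>B. \<forall>v\<in>insert x U. Poly_Mapping.lookup b v \<le> Poly_Mapping.lookup a v"
  proof
    fix a assume "a \<in> A"
    show "\<exists>b\<in>B. \<forall>v\<in>insert x U. Poly_Mapping.lookup b v \<le> Poly_Mapping.lookup a v"
    proof (cases "Poly_Mapping.lookup a x < N")
      case True
      from Bf(3)[of "Poly_Mapping.lookup a x"] \<open>a \<in> A\<close> obtain b where
        "b \<in> Bf (Poly_Mapping.lookup a x)" "\<forall>v\<in>U. Poly_Mapping.lookup b v \<le> Poly_Mapping.lookup a v" by auto
      moreover have "Poly_Mapping.lookup b x = Poly_Mapping.lookup a x" using Bf(1) calculation(1) by blast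
      moreover have "b \<in> B" using True calculation(1) unfolding B_def by blast
      ultimately show ?thesis by (metis insert_iff order_refl)
    next
      case False
      from B0(3) \<open>a \<in> A\<close> obtain b where b: "b \<in> B0" "\<forall>v\<in>U. Poly_Mapping.lookup b v \<le> Poly_Mapping.lookup a v" by auto
      have "Poly_Mapping.lookup b x \<le> N" unfolding N_def using b(1) B0(2) by (intro Max_ge) auto
      moreover have "b \<in> B" using b(1) unfolding B_def by blast
      ultimately show ?thesis using False b(2) by (metis insert_iff le_trans not_less)
    qed
  qed
  ultimately show ?case by blast
qed

lemma dickson:
  "\<exists>B\<subseteq>A. finite B \<and> (\<forall>a\<in>A. \<exists>b\<in>B. \<forall>v. Poly_Mapping.lookup b v \<le> Poly_Mapping.lookup (a::'v::finite \<Rightarrow>\<^sub>0 nat) v)"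
  using dickson_aux[of "UNIV::'v set" A] by simp

lemma pm_diff_add:
  assumes "\<forall>v. Poly_Mapping.lookup b v \<le> Poly_Mapping.lookup (a::'v \<Rightarrow>\<^sub>0 nat) v"
  shows "b + (a - b) = a"
proof (rule poly_mapping_eqI)
  fix v
  have "Poly_Mapping.lookup b v \<le> Poly_Mapping.lookup a v" using assms by blast
  thus "Poly_Mapping.lookup (b + (a - b)) v = Poly_Mapping.lookup a v"
    unfolding lookup_add lookup_minus by simp
qed

lemma finite_mdeg:
  assumes "pointed dg TYPE('k::zero_neq_one)"
  shows "finite {m. mdeg dg m = w}"
proof -
  obtain B where B: "B \<subseteq> {m. mdeg dg m = w}" "finite B"
    "\<forall>a\<in>{m. mdeg dg m = w}. \<exists>b\<in>B. \<forall>v. Poly_Mapping.lookup b v \<le> Poly_Mapping.lookup a v"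
    using dickson[of "{m. mdeg dg m = w}"] by (elim exE conjE) blast
  have "{m. mdeg dg m = w} \<subseteq> B"
  proof
    fix a assume a: "a \<in> {m. mdeg dg m = w}"
    then obtain b where b: "b \<in> B" "\<forall>v. Poly_Mapping.lookup b v \<le> Poly_Mapping.lookup a v" using B(3) by blast
    have eq: "b + (a - b) = a" using b(2) by (rule pm_diff_add)
    have "mdeg dg b + mdeg dg (a - b) = mdeg dg a" using mdeg_add[of dg b "a - b"] eq by simp
    moreover have "mdeg dg b = w" using b(1) B(1) by blast
    moreover have "mdeg dg a = w" using a by simp
    ultimately have "mdeg dg (a - b) = 0" by simp
    hence "a - b = 0" using pointed_zero[OF assms] by blast
    hence "a = b" using eq by (metis add_0_right)
    thus "a \<in> B" using b(1) by simp
  qed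
  thus ?thesis using B(2) by (rule finite_subset)
qed

lemma smult_pm_conv: "smult_pm c f = Poly_Mapping.single 0 c * f"
  by (simp add: smult_pm_def mult_map_scale_conv_mult)

lemma module_smult_pm: "module (smult_pm :: 'k::comm_ring_1 \<Rightarrow> ('v,'k) mpoly_pm \<Rightarrow> _)"
proof
  fix a b :: 'k and x y :: "('v,'k) mpoly_pm"
  show "smult_pm a (x + y) = smult_pm a x + smult_pm a y" by (simp add: smult_pm_conv distrib_left)
  show "smult_pm (a + b) x = smult_pm a x + smult_pm b x" by (simp add: smult_pm_conv single_add distrib_right)
  show "smult_pm a (smult_pm b x) = smult_pm (a * b) x"
    by (simp add: smult_pm_conv mult_single flip: mult.assoc)
  show "smult_pm 1 x = x" by (simp add: smult_pm_conv)
qed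

lemma fin_dim_dsum:
  assumes "pointed dg TYPE('k::field)" "finite D"
  shows "fin_dim (dsum_homog dg D :: ('v::finite,'k) mpoly_pm set)"
proof -
  interpret m: module "smult_pm :: 'k \<Rightarrow> ('v,'k) mpoly_pm \<Rightarrow> _" by (rule module_smult_pm)
  define M where "M = (\<Union>w\<in>D. {m. mdeg dg m = w})"
  have fM: "finite M" unfolding M_def using assms finite_mdeg[OF assms(1)] by blast
  define B where "B = (\<lambda>m. Poly_Mapping.single m (1::'k)) ` M"
  show ?thesis unfolding fin_dim_def
  proof (intro exI conjI)
    show "finite B" using fM by (simp add: B_def)
    show "B \<subseteq> dsum_homog dg D" by (auto simp: B_def M_def dsum_homog_def)
    show "dsum_homog dg D \<subseteq> m.span B"
    proof
      fix f :: "('v,'k) mpoly_pm" assume f: "f \<in> dsum_homog dg D"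
      have "f = (\<Sum>m\<in>Poly_Mapping.keys f. smult_pm (Poly_Mapping.lookup f m) (Poly_Mapping.single m 1))"
        by (subst pm_expand) (simp add: smult_pm_def)
      also have "\<dots> \<in> m.span B"
      proof (rule m.span_sum)
        fix m assume "m \<in> Poly_Mapping.keys f"
        hence "m \<in> M" using f by (auto simp: dsum_homog_def M_def)
        hence "Poly_Mapping.single m 1 \<in> B" by (simp add: B_def)
        thus "smult_pm (Poly_Mapping.lookup f m) (Poly_Mapping.single m 1) \<in> m.span B"
          by (intro m.span_scale m.span_base)
      qed
      finally show "f \<in> m.span B" .
    qed
  qed
qed

lemma mdeg_single_Suc0[simp]: "mdeg dg (Poly_Mapping.single v (Suc 0)) = dg v"
  using mdeg_single[of dg v] by simp

lemma subalg_sum: "(\<And>x. x \<in> A \<Longrightarrow> g x \<in> subalg L) \<Longrightarrow> sum g A \<in> subalg L"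
proof (induction A rule: infinite_finite_induct)
  case (infinite A)
  have "const_pm 0 \<in> subalg L" by (rule sa_const)
  thus ?case using infinite by (simp add: const_pm_def)
next
  case empty
  have "const_pm 0 \<in> subalg L" by (rule sa_const)
  thus ?case by (simp add: const_pm_def)
next
  case (insert x F)
  thus ?case by (simp add: sa_add)
qed

lemma pointed_dg_ne0:
  fixes dg :: "'v::finite \<Rightarrow> 'g::ab_group_add"
  assumes "pointed dg TYPE('k::zero_neq_one)"
  shows "dg v \<noteq> 0"
proof
  assume "dg v = 0"
  hence "mdeg dg (Poly_Mapping.single v 1) = 0" by (simp add: mdeg_single)
  hence "Poly_Mapping.single v (1::nat) = 0" using pointed_zero[OF assms] by blast
  thus False by (metis lookup_single_eq lookup_zero one_neq_zero)
qed

lemma OmegaS_sub_range: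
  fixes dg :: "'v::finite \<Rightarrow> 'g::ab_group_add"
  assumes pt: "pointed dg TYPE('k::field)" and w: "w \<in> OmegaS dg TYPE('k)"
  shows "w \<in> range dg"
proof (rule ccontr)
  assume nr: "w \<notin> range dg"
  define L where "L = (\<Union>w'\<in>{w'. deg_less dg TYPE('k) w' w}. homog dg w' :: ('v,'k) mpoly_pm set)"
  have mono: "Poly_Mapping.single m c \<in> subalg L" if "mdeg dg m = w" for m and c :: 'k
  proof (cases "m = 0")
    case True
    thus ?thesis using sa_const[of c L] by (simp add: const_pm_def)
  next
    case False
    then obtain v where "Poly_Mapping.lookup m v \<noteq> 0"
      by (metis poly_mapping_eqI lookup_zero)
    define m' where "m' = m - Poly_Mapping.single v 1"
    have le: "\<forall>u. Poly_Mapping.lookup (Poly_Mapping.single v 1) u \<le> Poly_Mapping.lookup m u"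
      using \<open>Poly_Mapping.lookup m v \<noteq> 0\<close> by (auto simp: lookup_single when_def)
    have meq: "Poly_Mapping.single v 1 + m' = m" unfolding m'_def using le by (rule pm_diff_add)
    have dsum: "dg v + mdeg dg m' = w" using meq that mdeg_add[of dg "Poly_Mapping.single v 1" m']
      by (simp add: mdeg_single)
    have "Poly_Mapping.single m c = Poly_Mapping.single (Poly_Mapping.single v 1) 1 * Poly_Mapping.single m' c"
      using mult_single[of "Poly_Mapping.single v 1" "1::'k" m' c] meq by simp
    moreover have "Poly_Mapping.single (Poly_Mapping.single v 1) (1::'k) \<in> L"
    proof -
      have "w - dg v = mdeg dg m'" using dsum by (simp add: algebra_simps)
      hence "deg_less dg TYPE('k) (dg v) w" using nr mdeg_in_omegaS[of dg m']
        by (auto simp: deg_less_def deg_le_def)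
      thus ?thesis unfolding L_def by (auto intro!: homog_single simp: mdeg_single)
    qed
    moreover have "Poly_Mapping.single m' c \<in> L"
    proof -
      have "w - mdeg dg m' = dg v" using dsum by (simp add: algebra_simps)
      moreover have "mdeg dg m' \<noteq> w" using dsum pointed_dg_ne0[OF pt, of v] by auto
      ultimately have "deg_less dg TYPE('k) (mdeg dg m') w" using mdeg_in_omegaS[of dg "Poly_Mapping.single v 1"]
        by (auto simp: deg_less_def deg_le_def mdeg_single)
      thus ?thesis unfolding L_def by (auto intro!: homog_single)
    qed
    ultimately show ?thesis by (simp add: sa_mult sa_gen)
  qed
  have "homog dg w \<subseteq> subalg L"
  proof
    fix f :: "('v,'k) mpoly_pm" assume f: "f \<in> homog dg w"
    have "f = (\<Sum>m\<in>Poly_Mapping.keys f. Poly_Mapping.single m (Poly_Mapping.lookup f m))" by (rule pm_expand)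
    also have "\<dots> \<in> subalg L"
      by (rule subalg_sum) (use f mono in \<open>auto simp: homog_def\<close>)
    finally show "f \<in> subalg L" .
  qed
  with w show False by (simp add: OmegaS_def L_def)
qed

lemma sum_eq_single_nat:
  assumes "a + b = Poly_Mapping.single v (1::nat)"
  shows "a = 0 \<or> b = 0"
proof -
  have lu: "Poly_Mapping.lookup a u + Poly_Mapping.lookup b u = (if u = v then 1 else 0)" for u
    using arg_cong[OF assms, of "\<lambda>x. Poly_Mapping.lookup x u"] by (simp add: lookup_add lookup_single when_def)
  have "Poly_Mapping.lookup a v = 0 \<or> Poly_Mapping.lookup b v = 0" using lu[of v] by arith
  moreover have "Poly_Mapping.lookup a u = 0 \<and> Poly_Mapping.lookup b u = 0" if "u \<noteq> v" for u
    using lu[of u] that by simp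
  ultimately show ?thesis by (metis poly_mapping_eqI lookup_zero)
qed

lemma dg_in_OmegaS:
  fixes dg :: "'v::finite \<Rightarrow> 'g::ab_group_add"
  shows "dg v \<in> OmegaS dg TYPE('k::field)"
proof -
  define X where "X = Poly_Mapping.single v (1::nat)"
  define L where "L = (\<Union>w'\<in>{w'. deg_less dg TYPE('k) w' (dg v)}. homog dg w' :: ('v,'k) mpoly_pm set)"
  have X0: "X \<noteq> 0" unfolding X_def by (metis lookup_single_eq lookup_zero one_neq_zero)
  have L0: "Poly_Mapping.lookup p X = 0" if "p \<in> L" for p
  proof (rule ccontr)
    assume "Poly_Mapping.lookup p X \<noteq> 0"
    hence "X \<in> Poly_Mapping.keys p" by (simp add: in_keys_iff)
    with that show False unfolding L_def X_def by (auto simp: homog_def deg_less_def mdeg_single)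
  qed
  have inv: "Poly_Mapping.lookup p X = 0" if "p \<in> subalg L" for p
    using that
  proof (induction rule: subalg.induct)
    case (sa_const c) thus ?case using X0 by (simp add: const_pm_def lookup_single when_def)
  next
    case (sa_gen a) thus ?case by (rule L0)
  next
    case (sa_add a b) thus ?case by (simp add: lookup_add)
  next
    case (sa_mult p q)
    define a where "a = Poly_Mapping.lookup p 0"
    define b where "b = Poly_Mapping.lookup q 0"
    define p' where "p' = p - Poly_Mapping.single 0 a"
    define q' where "q' = q - Poly_Mapping.single 0 b"
    have p: "p = Poly_Mapping.single 0 a + p'" and q: "q = Poly_Mapping.single 0 b + q'"
      by (simp_all add: p'_def q'_def)
    have p'0: "Poly_Mapping.lookup p' 0 = 0" and q'0: "Poly_Mapping.lookup q' 0 = 0"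
      by (simp_all add: p'_def q'_def a_def b_def lookup_minus)
    have p'X: "Poly_Mapping.lookup p' X = 0" and q'X: "Poly_Mapping.lookup q' X = 0"
      using sa_mult.IH X0 by (simp_all add: p'_def q'_def lookup_minus lookup_single when_def)
    have pq: "p * q = Poly_Mapping.single 0 a * q + Poly_Mapping.single 0 b * p' + p' * q'"
      by (simp add: p q algebra_simps mult_single)
    have l1: "Poly_Mapping.lookup (Poly_Mapping.single 0 a * q) X = 0"
      using lookup_single_mult[of 0 a q X] sa_mult.IH by simp
    have l2: "Poly_Mapping.lookup (Poly_Mapping.single 0 b * p') X = 0"
      using lookup_single_mult[of 0 b p' X] p'X by simp
    have l3: "Poly_Mapping.lookup (p' * q') X = 0"
    proof (rule ccontr)
      assume "Poly_Mapping.lookup (p' * q') X \<noteq> 0"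
      hence "X \<in> Poly_Mapping.keys (p' * q')" by (simp add: in_keys_iff)
      then obtain c d where cd: "X = c + d" "c \<in> Poly_Mapping.keys p'" "d \<in> Poly_Mapping.keys q'"
        using keys_mult by blast
      hence "c = 0 \<or> d = 0" using sum_eq_single_nat X_def by metis
      thus False using cd p'0 q'0 by (auto simp: in_keys_iff)
    qed
    show ?case using l1 l2 l3 pq by (simp add: lookup_add)
  qed
  have XS: "Poly_Mapping.single X (1::'k) \<in> homog dg (dg v)"
    by (rule homog_single) (simp add: X_def mdeg_single)
  have "Poly_Mapping.single X (1::'k) \<notin> subalg L" using inv[of "Poly_Mapping.single X 1"]
    by (metis lookup_single_eq one_neq_zero)
  hence "\<not> homog dg (dg v) \<subseteq> subalg L" using XS by blast
  moreover have "dg v \<in> omegaS dg TYPE('k)" using mdeg_in_omegaS[of dg X] by (simp add: X_def mdeg_single)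
  ultimately show ?thesis by (simp add: OmegaS_def L_def)
qed

lemma finite_OmegaS:
  fixes dg :: "'v::finite \<Rightarrow> 'g::ab_group_add"
  assumes "pointed dg TYPE('k::field)"
  shows "finite (OmegaS dg TYPE('k))"
  by (rule finite_subset[of _ "range dg"]) (use OmegaS_sub_range[OF assms] in auto)

lemma dsum_add: "f \<in> dsum_homog dg D \<Longrightarrow> g \<in> dsum_homog dg D \<Longrightarrow> f + g \<in> dsum_homog dg D"
proof -
  assume f: "f \<in> dsum_homog dg D" and g: "g \<in> dsum_homog dg D"
  show ?thesis unfolding dsum_homog_def
  proof
    show "\<forall>m\<in>Poly_Mapping.keys (f + g). mdeg dg m \<in> D"
    proof
      fix m assume "m \<in> Poly_Mapping.keys (f + g)"
      hence "m \<in> Poly_Mapping.keys f \<or> m \<in> Poly_Mapping.keys g"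
        by (auto simp: in_keys_iff lookup_add)
      thus "mdeg dg m \<in> D" using f g by (auto simp: dsum_homog_def)
    qed
  qed
qed

lemma dsum_sum: "(\<And>x. x \<in> A \<Longrightarrow> g x \<in> dsum_homog dg D) \<Longrightarrow> sum g A \<in> dsum_homog dg D"
proof (induction A rule: infinite_finite_induct)
  case (infinite A) thus ?case by (simp add: dsum_homog_def)
next
  case empty thus ?case by (simp add: dsum_homog_def)
next
  case (insert x F) thus ?case by (simp add: dsum_add)
qed

lemma homog_sub_dsum: "u \<in> D \<Longrightarrow> homog dg u \<subseteq> dsum_homog dg D"
  by (auto simp: homog_def dsum_homog_def)

lemma const_pm_smult: "const_pm c = smult_pm c (1 :: ('v,'k::comm_ring_1) mpoly_pm)"
  by (simp add: smult_pm_conv const_pm_def)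

context
  fixes dg :: "'v::finite \<Rightarrow> 'g::ab_group_add"
    and \<phi> :: "('v,'k::field) mpoly_pm \<Rightarrow> ('v,'k) mpoly_pm"
    and \<psi> :: "'g \<Rightarrow> 'g"
  assumes GA: "graded_aut dg \<phi> \<psi>"
begin

lemma phi_add: "\<phi> (f + g) = \<phi> f + \<phi> g" using GA by (simp add: graded_aut_def)
lemma phi_mult: "\<phi> (f * g) = \<phi> f * \<phi> g" using GA by (simp add: graded_aut_def)
lemma phi_one: "\<phi> 1 = 1" using GA by (simp add: graded_aut_def)
lemma phi_smult: "\<phi> (smult_pm c f) = smult_pm c (\<phi> f)" using GA by (simp add: graded_aut_def)
lemma phi_bij: "bij \<phi>" using GA by (simp add: graded_aut_def)
lemma psi_bij: "bij \<psi>" using GA by (simp add: graded_aut_def)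
lemma psi_add: "\<psi> (a + b) = \<psi> a + \<psi> b" using GA by (simp add: graded_aut_def)
lemma phi_homog: "\<phi> ` homog dg w = homog dg (\<psi> w)" using GA by (simp add: graded_aut_def)

lemma phi_additive: "additive \<phi>" by unfold_locales (rule phi_add)
lemma psi_additive: "additive \<psi>" by unfold_locales (rule psi_add)

lemma phi_0: "\<phi> 0 = 0" using additive.zero[OF phi_additive] .
lemma psi_diff: "\<psi> (a - b) = \<psi> a - \<psi> b" using additive.diff[OF psi_additive] .
lemma psi_0: "\<psi> 0 = 0" using additive.zero[OF psi_additive] .
lemma psi_minus: "\<psi> (- a) = - \<psi> a" using additive.minus[OF psi_additive] .
lemma phi_sum: "\<phi> (sum g A) = (\<Sum>x\<in>A. \<phi> (g x))" using additive.sum[OF phi_additive] .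
lemma psi_sum: "\<psi> (sum g A) = (\<Sum>x\<in>A. \<psi> (g x))" using additive.sum[OF psi_additive] .

lemma phi_inj: "\<phi> a = \<phi> b \<Longrightarrow> a = b" using phi_bij by (auto simp: bij_def inj_def)
lemma psi_inj: "\<psi> a = \<psi> b \<Longrightarrow> a = b" using psi_bij by (auto simp: bij_def inj_def)
lemma psi_surj: "\<exists>u. \<psi> u = w" using psi_bij by (metis bij_def surj_def)

lemma phi_const: "\<phi> (const_pm c) = const_pm c"
  by (simp add: const_pm_smult phi_smult phi_one)

lemma phi_in_homog: "f \<in> homog dg w \<Longrightarrow> \<phi> f \<in> homog dg (\<psi> w)"
  using phi_homog by blast

lemma omegaS_psi: "w \<in> omegaS dg TYPE('k) \<Longrightarrow> \<psi> w \<in> omegaS dg TYPE('k)"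
proof -
  assume "w \<in> omegaS dg TYPE('k)"
  then obtain f :: "('v,'k) mpoly_pm" where f: "f \<in> homog dg w" "f \<noteq> 0" by (auto simp: omegaS_def)
  have "\<phi> f \<noteq> 0" using f(2) phi_0 phi_inj by metis
  thus ?thesis using phi_in_homog[OF f(1)] by (auto simp: omegaS_def)
qed

lemma omegaS_psi_rev: "\<psi> w \<in> omegaS dg TYPE('k) \<Longrightarrow> w \<in> omegaS dg TYPE('k)"
proof -
  assume "\<psi> w \<in> omegaS dg TYPE('k)"
  then obtain g :: "('v,'k) mpoly_pm" where g: "g \<in> homog dg (\<psi> w)" "g \<noteq> 0" by (auto simp: omegaS_def)
  then obtain f where f: "f \<in> homog dg w" "g = \<phi> f" using phi_homog[of w] by blast
  have "f \<noteq> 0" using g(2) f(2) phi_0 by auto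
  thus ?thesis using f(1) by (auto simp: omegaS_def)
qed

lemma deg_less_psi_rev: "deg_less dg TYPE('k) (\<psi> u) (\<psi> w) \<Longrightarrow> deg_less dg TYPE('k) u w"
  unfolding deg_less_def deg_le_def
  using omegaS_psi_rev[of "w - u"] psi_diff[of w u] by auto

lemma OmegaS_psi:
  assumes w: "w \<in> OmegaS dg TYPE('k)"
  shows "\<psi> w \<in> OmegaS dg TYPE('k)"
proof (rule ccontr)
  assume nw: "\<psi> w \<notin> OmegaS dg TYPE('k)"
  define L where "L = (\<Union>w'\<in>{w'. deg_less dg TYPE('k) w' w}. homog dg w' :: ('v,'k) mpoly_pm set)"
  define L' where "L' = (\<Union>w'\<in>{w'. deg_less dg TYPE('k) w' (\<psi> w)}. homog dg w' :: ('v,'k) mpoly_pm set)"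
  have "w \<in> omegaS dg TYPE('k)" using w by (simp add: OmegaS_def)
  hence "\<psi> w \<in> omegaS dg TYPE('k)" by (rule omegaS_psi)
  with nw have sub: "homog dg (\<psi> w) \<subseteq> subalg L'" by (simp add: OmegaS_def L'_def)
  have lift: "\<exists>q\<in>subalg L. \<phi> q = p" if "p \<in> subalg L'" for p
    using that
  proof (induction rule: subalg.induct)
    case (sa_const c) thus ?case by (intro bexI[of _ "const_pm c"] subalg.sa_const) (simp add: phi_const)
  next
    case (sa_gen a)
    then obtain w' where w': "deg_less dg TYPE('k) w' (\<psi> w)" "a \<in> homog dg w'" by (auto simp: L'_def)
    obtain u where u: "\<psi> u = w'" using psi_surj by blast
    have "deg_less dg TYPE('k) u w" using w' u deg_less_psi_rev by blast
    moreover obtain q where "q \<in> homog dg u" "\<phi> q = a" using w'(2) u phi_homog[of u] by (metis imageE)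
    ultimately show ?case by (intro bexI[of _ q] subalg.sa_gen) (auto simp: L_def)
  next
    case (sa_add a b)
    then obtain qa qb where "qa \<in> subalg L" "\<phi> qa = a" "qb \<in> subalg L" "\<phi> qb = b" by blast
    thus ?case by (intro bexI[of _ "qa + qb"] subalg.sa_add) (auto simp: phi_add)
  next
    case (sa_mult a b)
    then obtain qa qb where "qa \<in> subalg L" "\<phi> qa = a" "qb \<in> subalg L" "\<phi> qb = b" by blast
    thus ?case by (intro bexI[of _ "qa * qb"] subalg.sa_mult) (auto simp: phi_mult)
  qed
  have "homog dg w \<subseteq> subalg L"
  proof
    fix f :: "('v,'k) mpoly_pm" assume "f \<in> homog dg w"
    hence "\<phi> f \<in> subalg L'" using sub phi_in_homog by blast
    then obtain q where "q \<in> subalg L" "\<phi> q = \<phi> f" using lift by blast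
    thus "f \<in> subalg L" using phi_inj by metis
  qed
  with w show False by (simp add: OmegaS_def L_def)
qed

lemma invariance: "\<phi> ` dsum_homog dg (OmegaS dg TYPE('k)) \<subseteq> dsum_homog dg (OmegaS dg TYPE('k))"
proof
  fix y assume "y \<in> \<phi> ` dsum_homog dg (OmegaS dg TYPE('k))"
  then obtain f where f: "f \<in> dsum_homog dg (OmegaS dg TYPE('k))" "y = \<phi> f" by blast
  have "y = \<phi> (\<Sum>m\<in>Poly_Mapping.keys f. Poly_Mapping.single m (Poly_Mapping.lookup f m))"
    using f(2) pm_expand[of f] by simp
  also have "\<dots> = (\<Sum>m\<in>Poly_Mapping.keys f. \<phi> (Poly_Mapping.single m (Poly_Mapping.lookup f m)))"
    by (rule phi_sum)
  also have "\<dots> \<in> dsum_homog dg (OmegaS dg TYPE('k))"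
  proof (rule dsum_sum)
    fix m assume "m \<in> Poly_Mapping.keys f"
    hence "mdeg dg m \<in> OmegaS dg TYPE('k)" using f(1) by (auto simp: dsum_homog_def)
    hence "\<psi> (mdeg dg m) \<in> OmegaS dg TYPE('k)" by (rule OmegaS_psi)
    moreover have "\<phi> (Poly_Mapping.single m (Poly_Mapping.lookup f m)) \<in> homog dg (\<psi> (mdeg dg m))"
      by (rule phi_in_homog, rule homog_single) simp
    ultimately show "\<phi> (Poly_Mapping.single m (Poly_Mapping.lookup f m)) \<in> dsum_homog dg (OmegaS dg TYPE('k))"
      using homog_sub_dsum by blast
  qed
  finally show "y \<in> dsum_homog dg (OmegaS dg TYPE('k))" .
qed

lemma phi_power: "\<phi> (x ^ n) = \<phi> x ^ n"
  by (induction n) (simp_all add: phi_one phi_mult)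

lemma phi_prod: "\<phi> (prod g A) = (\<Prod>x\<in>A. \<phi> (g x))"
  by (induction A rule: infinite_finite_induct) (simp_all add: phi_one phi_mult)

lemma psi_nsmul: "\<psi> (nsmul n x) = nsmul n (\<psi> x)"
  by (rule nsmul_hom) (rule psi_add)

lemma faithful:
  assumes eff: "effective dg TYPE('k)"
    and fx: "\<forall>f\<in>dsum_homog dg (OmegaS dg TYPE('k)). \<phi> f = f"
  shows "\<phi> = id \<and> \<psi> = id"
proof
  define X where "X = (\<lambda>v::'v. Poly_Mapping.single (Poly_Mapping.single v (1::nat)) (1::'k))"
  have XV: "X v \<in> dsum_homog dg (OmegaS dg TYPE('k))" for v
    using homog_sub_dsum[OF dg_in_OmegaS[of dg v]] homog_single[of dg "Poly_Mapping.single v 1" "dg v" "1::'k"]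
    by (auto simp: X_def mdeg_single)
  have phiX: "\<phi> (X v) = X v" for v using fx XV by blast
  have Xpow: "X v ^ n = Poly_Mapping.single (Poly_Mapping.single v n) 1" for v n
    by (induction n) (simp_all add: X_def mult_single flip: single_add)
  have mono: "Poly_Mapping.single m (1::'k) = (\<Prod>v\<in>UNIV. X v ^ Poly_Mapping.lookup m v)" for m :: "'v \<Rightarrow>\<^sub>0 nat"
  proof -
    have msum: "m = (\<Sum>v\<in>UNIV. Poly_Mapping.single v (Poly_Mapping.lookup m v))"
      by (rule poly_mapping_eqI) (simp add: lookup_sum lookup_single when_def)
    have pr: "(\<Prod>v\<in>A. X v ^ Poly_Mapping.lookup m v) =
          Poly_Mapping.single (\<Sum>v\<in>A. Poly_Mapping.single v (Poly_Mapping.lookup m v)) 1" for A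
      by (induction A rule: infinite_finite_induct) (simp_all add: Xpow mult_single)
    from msum have "Poly_Mapping.single m (1::'k) = Poly_Mapping.single (\<Sum>v\<in>UNIV. Poly_Mapping.single v (Poly_Mapping.lookup m v)) 1"
      by (rule arg_cong[where f="\<lambda>x. Poly_Mapping.single x (1::'k)"])
    also have "\<dots> = (\<Prod>v\<in>UNIV. X v ^ Poly_Mapping.lookup m v)" by (rule pr[symmetric])
    finally show ?thesis .
  qed
  have phim: "\<phi> (Poly_Mapping.single m (1::'k)) = Poly_Mapping.single m 1" for m
    using mono[of m] by (simp add: phi_prod phi_power phiX)
  have phimc: "\<phi> (Poly_Mapping.single m c) = Poly_Mapping.single m c" for m c
  proof -
    have "Poly_Mapping.single m c = smult_pm c (Poly_Mapping.single m (1::'k))"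
      by (simp add: smult_pm_def)
    thus ?thesis by (simp add: phi_smult phim)
  qed
  show "\<phi> = id"
  proof
    fix p
    have "\<phi> p = \<phi> (\<Sum>m\<in>Poly_Mapping.keys p. Poly_Mapping.single m (Poly_Mapping.lookup p m))"
      using pm_expand[of p] by simp
    also have "\<dots> = (\<Sum>m\<in>Poly_Mapping.keys p. Poly_Mapping.single m (Poly_Mapping.lookup p m))"
      by (simp add: phi_sum phimc)
    also have "\<dots> = p" using pm_expand[of p] by simp
    finally show "\<phi> p = id p" by simp
  qed
  have psidg: "\<psi> (dg v) = dg v" for v
  proof -
    have "\<phi> (X v) \<in> homog dg (\<psi> (dg v))"
      by (rule phi_in_homog) (simp add: X_def homog_single mdeg_single)
    hence "X v \<in> homog dg (\<psi> (dg v))" using phiX by simp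
    moreover have "Poly_Mapping.single v 1 \<in> Poly_Mapping.keys (X v)" by (simp add: X_def)
    ultimately show ?thesis by (auto simp: homog_def mdeg_single)
  qed
  have psim: "\<psi> (mdeg dg m) = mdeg dg m" for m
    by (simp add: mdeg_def psi_sum psi_nsmul psidg)
  have psiO: "\<psi> w = w" if "w \<in> omegaS dg TYPE('k)" for w
    using omegaS_ex[OF that] psim by blast
  show "\<psi> = id"
  proof
    fix a
    have "a \<in> gen_subgroup (omegaS dg TYPE('k))" using eff by (simp add: effective_def)
    hence "\<psi> a = a"
    proof (induction rule: gen_subgroup.induct)
      case gs_zero thus ?case by (rule psi_0)
    next
      case (gs_gen a) thus ?case by (rule psiO)
    next
      case (gs_add a b) thus ?case by (simp add: psi_add)
    next
      case (gs_neg a) thus ?case by (simp add: psi_minus)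
    qed
    thus "\<psi> a = id a" by simp
  qed
qed

end

lemma ex_key: "\<exists>key :: ('v::finite \<Rightarrow>\<^sub>0 nat) \<Rightarrow> (nat \<Rightarrow>\<^sub>0 nat). inj key \<and> (\<forall>a b. key (a + b) = key a + key b)"
proof -
  obtain \<iota> :: "'v \<Rightarrow> nat" where inj: "inj \<iota>"
    using finite_imp_inj_to_nat_seg[of "UNIV :: 'v set"] by auto
  define key where "key = (\<lambda>m :: 'v \<Rightarrow>\<^sub>0 nat. Abs_poly_mapping (\<lambda>i. if i \<in> range \<iota> then Poly_Mapping.lookup m (inv \<iota> i) else 0))"
  have fin: "finite {i. (if i \<in> range \<iota> then Poly_Mapping.lookup m (inv \<iota> i) else 0) \<noteq> 0}" for m :: "'v \<Rightarrow>\<^sub>0 nat"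
    by (rule finite_subset[of _ "range \<iota>"]) auto
  have lk: "Poly_Mapping.lookup (key m) i = (if i \<in> range \<iota> then Poly_Mapping.lookup m (inv \<iota> i) else 0)" for m i
    unfolding key_def using fin[of m] by simp
  have "inj key"
  proof (rule injI)
    fix a b assume "key a = key b"
    hence "Poly_Mapping.lookup (key a) (\<iota> v) = Poly_Mapping.lookup (key b) (\<iota> v)" for v by simp
    hence "Poly_Mapping.lookup a v = Poly_Mapping.lookup b v" for v using inj by (simp add: lk)
    thus "a = b" by (rule poly_mapping_eqI)
  qed
  moreover have "key (a + b) = key a + key b" for a b
    by (rule poly_mapping_eqI) (simp add: lk lookup_add)
  ultimately show ?thesis by blast
qed

lemma finite_OmegaI:
  fixes dg :: "'v::finite \<Rightarrow> 'g::ab_group_add" and I :: "('v,'k::field) mpoly_pm set"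
  assumes pt: "pointed dg TYPE('k)" and idl: "is_ideal I"
  shows "finite (OmegaI dg I)"
proof -
  obtain key :: "('v \<Rightarrow>\<^sub>0 nat) \<Rightarrow> (nat \<Rightarrow>\<^sub>0 nat)" where kinj: "inj key" and kadd: "\<And>a b. key (a + b) = key a + key b"
    using ex_key by blast
  have I0: "0 \<in> I" and Iadd: "\<And>a b. a \<in> I \<Longrightarrow> b \<in> I \<Longrightarrow> a + b \<in> I" and Imult: "\<And>r a. a \<in> I \<Longrightarrow> r * a \<in> I"
    using idl by (auto simp: is_ideal_def)
  have Idiff: "a - b \<in> I" if "a \<in> I" "b \<in> I" for a b
  proof -
    have "(- 1) * b \<in> I" using Imult that(2) by blast
    hence "a + (- 1) * b \<in> I" using Iadd that(1) by blast
    thus ?thesis by simp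
  qed
  define LM where "LM = {a. \<exists>g u. g \<in> I \<and> g \<in> homog dg u \<and> g \<noteq> 0 \<and> a \<in> Poly_Mapping.keys g \<and>
        (\<forall>a'\<in>Poly_Mapping.keys g. key a' \<le> key a)}"
  obtain B where B: "B \<subseteq> LM" "finite B" "\<forall>a\<in>LM. \<exists>b\<in>B. \<forall>v. Poly_Mapping.lookup b v \<le> Poly_Mapping.lookup a v"
    using dickson[of LM] by (elim exE conjE) blast
  define D where "D = mdeg dg ` B"
  have "OmegaI dg I \<subseteq> D"
  proof
    fix w assume wO: "w \<in> OmegaI dg I"
    show "w \<in> D"
    proof (rule ccontr)
      assume wD: "w \<notin> D"
      define J where "J = ideal_gen (\<Union>w'\<in>{w'. deg_less dg TYPE('k) w' w}. I \<inter> homog dg w')"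
      define Mw where "Mw = {m. mdeg dg m = w}"
      have fMw: "finite Mw" unfolding Mw_def by (rule finite_mdeg[OF pt])
      define \<mu> where "\<mu> = (\<lambda>x. card {m\<in>Mw. key m \<le> x})"
      have P: "\<forall>g. g \<in> I \<longrightarrow> g \<in> homog dg w \<longrightarrow> (\<forall>k\<in>Poly_Mapping.keys g. \<mu> (key k) \<le> n) \<longrightarrow> g \<in> J" for n
      proof (induction n)
        case 0
        show ?case
        proof (intro allI impI)
          fix g :: "('v,'k) mpoly_pm" assume g: "g \<in> I" "g \<in> homog dg w" "\<forall>k\<in>Poly_Mapping.keys g. \<mu> (key k) \<le> 0"
          have "Poly_Mapping.keys g = {}"
          proof (rule ccontr)
            assume "Poly_Mapping.keys g \<noteq> {}"
            then obtain k where k: "k \<in> Poly_Mapping.keys g" by blast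
            hence "k \<in> {m\<in>Mw. key m \<le> key k}" using g(2) by (auto simp: homog_def Mw_def)
            hence "\<mu> (key k) > 0" unfolding \<mu>_def using fMw by (auto simp: card_gt_0_iff)
            thus False using g(3) k by auto
          qed
          hence "g = 0" by simp
          thus "g \<in> J" by (simp add: J_def ideal_gen.ig_zero)
        qed
      next
        case (Suc n)
        show ?case
        proof (intro allI impI)
          fix g :: "('v,'k) mpoly_pm" assume g: "g \<in> I" "g \<in> homog dg w" "\<forall>k\<in>Poly_Mapping.keys g. \<mu> (key k) \<le> Suc n"
          show "g \<in> J"
          proof (cases "g = 0")
            case True thus ?thesis by (simp add: J_def ideal_gen.ig_zero)
          next
            case False
            hence ne: "Poly_Mapping.keys g \<noteq> {}" by simp
            define k0 where "k0 = Max (key ` Poly_Mapping.keys g)"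
            have "k0 \<in> key ` Poly_Mapping.keys g" unfolding k0_def using ne by (intro Max_in) auto
            then obtain a where a: "a \<in> Poly_Mapping.keys g" "key a = k0" by blast
            have amax: "\<forall>a'\<in>Poly_Mapping.keys g. key a' \<le> key a" using a(2) unfolding k0_def by auto
            have aLM: "a \<in> LM" unfolding LM_def using g(1,2) False a(1) amax by blast
            have aw: "mdeg dg a = w" using g(2) a(1) by (auto simp: homog_def)
            obtain b where b: "b \<in> B" "\<forall>v. Poly_Mapping.lookup b v \<le> Poly_Mapping.lookup a v" using B(3) aLM by blast
            have "b \<in> LM" using b(1) B(1) by blast
            then obtain f u where f: "f \<in> I" "f \<in> homog dg u" "f \<noteq> 0" "b \<in> Poly_Mapping.keys f"
              "\<forall>a'\<in>Poly_Mapping.keys f. key a' \<le> key b" unfolding LM_def by blast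
            have fh: "f \<in> homog dg (mdeg dg b)" using f(2,4) by (auto simp: homog_def)
            define t where "t = a - b"
            have bt: "b + t = a" unfolding t_def using b(2) by (rule pm_diff_add)
            have deg: "mdeg dg b + mdeg dg t = w" using bt aw mdeg_add[of dg b t] by simp
            have "mdeg dg b \<in> D" using b(1) by (simp add: D_def)
            hence bw: "mdeg dg b \<noteq> w" using wD by auto
            have dl: "deg_less dg TYPE('k) (mdeg dg b) w"
            proof -
              have "w - mdeg dg b = mdeg dg t" using deg by (simp add: algebra_simps)
              thus ?thesis using bw mdeg_in_omegaS[of dg t] by (simp add: deg_less_def deg_le_def)
            qed
            have fJ: "f \<in> J" unfolding J_def using f(1) fh dl by (intro ideal_gen.ig_gen) blast
            define c where "c = Poly_Mapping.lookup g a / Poly_Mapping.lookup f b"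
            define h where "h = Poly_Mapping.single t c * f"
            have hJ: "h \<in> J" unfolding h_def J_def using fJ[unfolded J_def] by (rule ideal_gen.ig_mult)
            have hI: "h \<in> I" unfolding h_def using f(1) by (rule Imult)
            have fb0: "Poly_Mapping.lookup f b \<noteq> 0" using f(4) by (simp add: in_keys_iff)
            have ha: "Poly_Mapping.lookup h a = Poly_Mapping.lookup g a"
              using lookup_single_mult[of t c f b] fb0 bt by (simp add: h_def c_def add.commute)
            have hkeys: "\<exists>m\<in>Poly_Mapping.keys f. k = t + m" if "k \<in> Poly_Mapping.keys h" for k
              using that keys_single_mult unfolding h_def by blast
            define g' where "g' = g - h"
            have g'I: "g' \<in> I" unfolding g'_def using g(1) hI by (rule Idiff)
            have g'keys: "k \<in> Poly_Mapping.keys g \<or> k \<in> Poly_Mapping.keys h" if "k \<in> Poly_Mapping.keys g'" for k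
              using that by (auto simp: g'_def in_keys_iff lookup_minus)
            have g'h: "g' \<in> homog dg w"
              unfolding homog_def
            proof
              show "\<forall>m\<in>Poly_Mapping.keys g'. mdeg dg m = w"
              proof
                fix k assume "k \<in> Poly_Mapping.keys g'"
                hence "k \<in> Poly_Mapping.keys g \<or> k \<in> Poly_Mapping.keys h" by (rule g'keys)
                thus "mdeg dg k = w"
                proof
                  assume "k \<in> Poly_Mapping.keys g" thus ?thesis using g(2) by (auto simp: homog_def)
                next
                  assume "k \<in> Poly_Mapping.keys h"
                  then obtain m where m: "m \<in> Poly_Mapping.keys f" "k = t + m" using hkeys by blast
                  have "mdeg dg m = mdeg dg b" using fh m(1) by (auto simp: homog_def)
                  thus ?thesis using m(2) deg mdeg_add[of dg t m] by (simp add: add.commute)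
                qed
              qed
            qed
            have less: "key k < key a" if "k \<in> Poly_Mapping.keys g'" for k
            proof -
              have "key k \<le> key a"
              proof (cases "k \<in> Poly_Mapping.keys g")
                case True thus ?thesis using amax by blast
              next
                case False
                hence "k \<in> Poly_Mapping.keys h" using g'keys[OF that] by blast
                then obtain m where m: "m \<in> Poly_Mapping.keys f" "k = t + m" using hkeys by blast
                have "key m \<le> key b" using f(5) m(1) by blast
                hence "key t + key m \<le> key t + key b" by (rule add_left_mono)
                thus ?thesis using m(2) bt kadd by (metis add.commute)
              qed
              moreover have "k \<noteq> a"
              proof
                assume "k = a"
                hence "Poly_Mapping.lookup g' k = 0" using ha by (simp add: g'_def lookup_minus)
                thus False using that by (simp add: in_keys_iff)
              qed
              hence "key k \<noteq> key a" using kinj by (auto simp: inj_def)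
              ultimately show ?thesis by simp
            qed
            have "\<forall>k\<in>Poly_Mapping.keys g'. \<mu> (key k) \<le> n"
            proof
              fix k assume k: "k \<in> Poly_Mapping.keys g'"
              have kl: "key k < key a" by (rule less[OF k])
              have aM: "a \<in> {m\<in>Mw. key m \<le> key a}" using aw by (simp add: Mw_def)
              have "{m\<in>Mw. key m \<le> key k} \<subset> {m\<in>Mw. key m \<le> key a}"
              proof
                show "{m\<in>Mw. key m \<le> key k} \<subseteq> {m\<in>Mw. key m \<le> key a}" using kl by auto
                show "{m\<in>Mw. key m \<le> key k} \<noteq> {m\<in>Mw. key m \<le> key a}"
                proof
                  assume "{m\<in>Mw. key m \<le> key k} = {m\<in>Mw. key m \<le> key a}"
                  hence "key a \<le> key k" using aM by blast
                  thus False using kl by simp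
                qed
              qed
              hence "\<mu> (key k) < \<mu> (key a)" unfolding \<mu>_def by (rule psubset_card_mono[rotated]) (use fMw in auto)
              moreover have "\<mu> (key a) \<le> Suc n" using g(3) a(1) by blast
              ultimately show "\<mu> (key k) \<le> n" by simp
            qed
            hence g'J: "g' \<in> J" using Suc.IH g'I g'h by blast
            have "g = g' + h" by (simp add: g'_def)
            thus "g \<in> J" using g'J hJ unfolding J_def by (simp add: ideal_gen.ig_add)
          qed
        qed
      qed
      have "I \<inter> homog dg w \<subseteq> J"
      proof
        fix g assume g: "g \<in> I \<inter> homog dg w"
        have "\<forall>k\<in>Poly_Mapping.keys g. \<mu> (key k) \<le> card Mw"
          unfolding \<mu>_def using fMw by (auto intro!: card_mono)
        thus "g \<in> J" using P[of "card Mw"] g by blast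
      qed
      with wO show False by (simp add: OmegaI_def J_def)
    qed
  qed
  moreover have "finite D" using B(2) by (simp add: D_def)
  ultimately show ?thesis by (rule finite_subset)
qed

theorem mainTheorem5:
  fixes dg :: "'v::finite \<Rightarrow> 'g::ab_group_add"
    and I :: "('v, 'k::field_char_0) mpoly_pm set"
  assumes "alg_closed TYPE('k)"
    and "fin_gen_group TYPE('g)"
    and "effective dg TYPE('k)"
    and "pointed dg TYPE('k)"
    and "homogeneous_ideal dg I"
  shows "fin_dim (dsum_homog dg (OmegaS dg TYPE('k)) :: ('v,'k) mpoly_pm set)
    \<and> fin_dim (dsum_homog dg (OmegaI dg I) :: ('v,'k) mpoly_pm set)
    \<and> (\<forall>(\<phi> :: (('v,'k) mpoly_pm \<Rightarrow> ('v,'k) mpoly_pm)) \<psi>. graded_aut dg \<phi> \<psi> \<longrightarrow>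
          \<phi> ` (dsum_homog dg (OmegaS dg TYPE('k))) \<subseteq> dsum_homog dg (OmegaS dg TYPE('k)))
    \<and> (\<forall>(\<phi> :: (('v,'k) mpoly_pm \<Rightarrow> ('v,'k) mpoly_pm)) \<psi>. graded_aut dg \<phi> \<psi> \<longrightarrow>
          (\<forall>f\<in>dsum_homog dg (OmegaS dg TYPE('k)). \<phi> f = f) \<longrightarrow> \<phi> = id \<and> \<psi> = id)"
proof -
  have pt: "pointed dg TYPE('k)" by fact
  have eff: "effective dg TYPE('k)" by fact
  have idl: "is_ideal I" using assms(5) by (simp add: homogeneous_ideal_def)
  have 1: "fin_dim (dsum_homog dg (OmegaS dg TYPE('k)) :: ('v,'k) mpoly_pm set)"
    by (rule fin_dim_dsum[OF pt finite_OmegaS[OF pt]])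
  have 2: "fin_dim (dsum_homog dg (OmegaI dg I) :: ('v,'k) mpoly_pm set)"
    by (rule fin_dim_dsum[OF pt finite_OmegaI[OF pt idl]])
  have 3: "\<forall>(\<phi> :: (('v,'k) mpoly_pm \<Rightarrow> ('v,'k) mpoly_pm)) \<psi>. graded_aut dg \<phi> \<psi> \<longrightarrow>
          \<phi> ` (dsum_homog dg (OmegaS dg TYPE('k))) \<subseteq> dsum_homog dg (OmegaS dg TYPE('k))"
    using invariance by blast
  have 4: "\<forall>(\<phi> :: (('v,'k) mpoly_pm \<Rightarrow> ('v,'k) mpoly_pm)) \<psi>. graded_aut dg \<phi> \<psi> \<longrightarrow>
          (\<forall>f\<in>dsum_homog dg (OmegaS dg TYPE('k)). \<phi> f = f) \<longrightarrow> \<phi> = id \<and> \<psi> = id"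
    using faithful[OF _ eff] by blast
  show ?thesis using 1 2 3 4 by blast
qed

end
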